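(* Let $q$ be a prime power, let $n_1,n_2,n_3,n_4$ be positive integers with $n=n_1+n_2+n_3+n_4$, and let $G=U_{n_1,n_2,n_3,n_4}=1+\mathfrak{g}$ be the unipotent radical of the standard parabolic subgroup of $\mathrm{GL}_n(\mathbb{F}_q)$ attached to the block sizes $(n_1,n_2,n_3,n_4)$. Here $\mathfrak{g}$ is the algebra of $n\times n$ matrices over $\mathbb{F}_q$ which, written in $4\times 4$ block form $(X_{ij})$ with $X_{ij}$ of size $n_i\times n_j$, satisfy $X_{ij}=0$ whenever $i\ge j$. Then $G$ is of good type: for every $S\in\mathfrak{g}^t$, the linear form $\lambda_S\in\mathfrak{g}^*$, $\lambda_S(X)=\operatorname{tr}(SX)$, admits an associative polarization.
   Context: $\mathfrak{g}^t=\{X^t: X\in\mathfrak{g}\}$. For $\lambda\in\mathfrak{g}^*$, define the skew-symmetric bilinear form $B_\lambda(x,y)=\lambda(xy-yx)$ on $\mathfrak{g}$. A subspace $\mathfrak{p}\subseteq\mathfrak{g}$ is isotropic if $B_\lambda(x,y)=0$ for all $x,y\in\mathfrak{p}$, and a polarization of $\lambda$ is a maximal isotropic subspace of $\mathfrak{g}$ for $B_\lambda$. An associative polarization of $\lambda$ is a polarization $\mathfrak{p}$ that is an associative subalgebra of $\mathfrak{g}$ and satisfies $\lambda(\mathfrak{p}^2)=0$, where $\mathfrak{p}^2$ is the span of products $xy$ with $x,y\in\mathfrak{p}$. A pattern group $G=1+\mathfrak{g}$ over $\mathbb{F}_q$ is said to be of good type if $\lambda_S$ admits an associative polarization for every $S\in\mathfrak{g}^t$.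 *)

theory Defs
  imports "Jordan_Normal_Form.Matrix"
begin

definition blk :: "nat \<Rightarrow> nat \<Rightarrow> nat \<Rightarrow> nat \<Rightarrow> nat" where
  "blk n1 n2 n3 i = (if i < n1 then 0 else if i < n1 + n2 then 1
                     else if i < n1 + n2 + n3 then 2 else 3)"

definition pattern_alg :: "nat \<Rightarrow> nat \<Rightarrow> nat \<Rightarrow> nat \<Rightarrow> 'a::field mat set" where
  "pattern_alg n1 n2 n3 n4 =
     {X \<in> carrier_mat (n1+n2+n3+n4) (n1+n2+n3+n4).
        \<forall>i j. i < n1+n2+n3+n4 \<longrightarrow> j < n1+n2+n3+n4 \<longrightarrow>
              blk n1 n2 n3 j \<le> blk n1 n2 n3 i \<longrightarrow> X $$ (i, j) = 0}"

definition mat_subspace :: "nat \<Rightarrow> 'a::field mat set \<Rightarrow> bool" where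
  "mat_subspace n V \<longleftrightarrow> V \<subseteq> carrier_mat n n \<and> 0\<^sub>m n n \<in> V \<and>
     (\<forall>x\<in>V. \<forall>y\<in>V. x + y \<in> V) \<and> (\<forall>c. \<forall>x\<in>V. c \<cdot>\<^sub>m x \<in> V)"

definition mtrace :: "'a::comm_ring_1 mat \<Rightarrow> 'a" where
  "mtrace A = (\<Sum>i<dim_row A. A $$ (i, i))"

definition lam :: "'a::field mat \<Rightarrow> 'a mat \<Rightarrow> 'a" where
  "lam S X = mtrace (S * X)"

definition Bform :: "('a::field mat \<Rightarrow> 'a) \<Rightarrow> 'a mat \<Rightarrow> 'a mat \<Rightarrow> 'a" where
  "Bform l x y = l (x * y - y * x)"

definition isotropic :: "('a::field mat \<Rightarrow> 'a) \<Rightarrow> 'a mat set \<Rightarrow> bool" where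
  "isotropic l P \<longleftrightarrow> (\<forall>x\<in>P. \<forall>y\<in>P. Bform l x y = 0)"

definition polarization :: "nat \<Rightarrow> 'a::field mat set \<Rightarrow> ('a mat \<Rightarrow> 'a) \<Rightarrow> 'a mat set \<Rightarrow> bool" where
  "polarization n g l P \<longleftrightarrow> mat_subspace n P \<and> P \<subseteq> g \<and> isotropic l P \<and>
     (\<forall>Q. mat_subspace n Q \<and> Q \<subseteq> g \<and> isotropic l Q \<and> P \<subseteq> Q \<longrightarrow> Q = P)"

definition prod_span :: "nat \<Rightarrow> 'a::field mat set \<Rightarrow> 'a mat set" where
  "prod_span n P = \<Inter> {V. mat_subspace n V \<and> {x * y | x y. x \<in> P \<and> y \<in> P} \<subseteq> V}"

definition assoc_polarization :: "nat \<Rightarrow> 'a::field mat set \<Rightarrow> ('a mat \<Rightarrow> 'a) \<Rightarrow> 'a mat set \<Rightarrow> bool" where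
  "assoc_polarization n g l P \<longleftrightarrow> polarization n g l P \<and>
     (\<forall>x\<in>P. \<forall>y\<in>P. x * y \<in> P) \<and> (\<forall>z \<in> prod_span n P. l z = 0)"

end

theory Submission imports Defs begin

lemma me: "A \<in> carrier_mat n n \<Longrightarrow> B \<in> carrier_mat n n \<Longrightarrow> i < n \<Longrightarrow> j < n \<Longrightarrow>
  (A * B) $$ (i, j) = (\<Sum>k<n. A $$ (i, k) * B $$ (k, j))"
  by (simp add: scalar_prod_def lessThan_atLeast0)

declare index_mult_mat(1)[simp del]

definition gs :: "nat \<Rightarrow> (nat \<Rightarrow> nat) \<Rightarrow> 'a::field mat set" where
  "gs n bk = {X \<in> carrier_mat n n. \<forall>i<n. \<forall>j<n. bk j \<le> bk i \<longrightarrow> X $$ (i, j) = 0}"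

definition cA :: "nat \<Rightarrow> (nat \<Rightarrow> nat) \<Rightarrow> 'a::field mat \<Rightarrow> 'a mat \<Rightarrow> bool" where
  "cA n bk S X \<longleftrightarrow> (\<forall>r<n. \<forall>j<n. bk r = 3 \<longrightarrow> (bk j = 1 \<or> bk j = 2) \<longrightarrow> (S * X) $$ (r, j) = 0)"

definition adm :: "nat \<Rightarrow> (nat \<Rightarrow> nat) \<Rightarrow> 'a::field mat \<Rightarrow> (nat \<Rightarrow> 'a) \<Rightarrow> bool" where
  "adm n bk S v \<longleftrightarrow> (\<forall>j<n. 2 \<le> bk j \<longrightarrow> v j = 0) \<and>
     (\<forall>r<n. bk r = 3 \<longrightarrow> (\<Sum>k<n. S $$ (r, k) * v k) = 0)"

definition cB :: "nat \<Rightarrow> (nat \<Rightarrow> nat) \<Rightarrow> 'a::field mat \<Rightarrow> 'a mat \<Rightarrow> bool" where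
  "cB n bk S X \<longleftrightarrow> (\<forall>v. adm n bk S v \<longrightarrow>
     (\<forall>r<n. bk r = 2 \<longrightarrow> (\<Sum>k<n. (S * X) $$ (r, k) * v k) = 0))"

definition PP :: "nat \<Rightarrow> (nat \<Rightarrow> nat) \<Rightarrow> 'a::field mat \<Rightarrow> 'a mat set" where
  "PP n bk S = {X \<in> gs n bk. cA n bk S X \<and> cB n bk S X}"

lemma gsD: "X \<in> gs n bk \<Longrightarrow> i < n \<Longrightarrow> j < n \<Longrightarrow> X $$ (i, j) \<noteq> 0 \<Longrightarrow> bk i < bk j"
  unfolding gs_def by force

lemma gs_carrier: "X \<in> gs n bk \<Longrightarrow> X \<in> carrier_mat n n"
  unfolding gs_def by auto

lemma colzero: assumes "S \<in> carrier_mat n n" "Y \<in> carrier_mat n n" "i < n" "k < n"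
  "\<forall>m<n. Y $$ (m, k) = 0" shows "(S * Y) $$ (i, k) = 0"
  using assms by (simp add: me)

lemma col0: assumes "S \<in> carrier_mat n n" "X \<in> gs n bk" "i < n" "k < n" "bk k = 0"
  shows "(S * X) $$ (i, k) = 0"
proof (rule colzero[OF assms(1) gs_carrier[OF assms(2)] assms(3,4)], intro allI impI)
  fix m assume "m < n"
  then show "X $$ (m, k) = 0" using gsD[OF assms(2) \<open>m < n\<close> assms(4)] assms(5) by auto
qed

context
  fixes n :: nat and bk :: "nat \<Rightarrow> nat" and S :: "'a::field mat"
  assumes S: "S \<in> carrier_mat n n" and bk3: "\<And>i. bk i \<le> 3"
begin

lemma PP_sub: "mat_subspace n (PP n bk S)"
proof -
  have z: "0\<^sub>m n n \<in> PP n bk S"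
    using S by (auto simp: PP_def gs_def cA_def cB_def me)
  have add: "X + Y \<in> PP n bk S" if X: "X \<in> PP n bk S" and Y: "Y \<in> PP n bk S" for X Y
  proof -
    have cX: "X \<in> carrier_mat n n" and cY: "Y \<in> carrier_mat n n"
      using X Y by (auto simp: PP_def gs_def)
    have e: "(S * (X + Y)) $$ (i, j) = (S * X) $$ (i, j) + (S * Y) $$ (i, j)" if "i < n" "j < n" for i j
      using that cX cY S by (simp add: me ring_distribs sum.distrib)
    show ?thesis using X Y cX cY unfolding PP_def gs_def cA_def cB_def
      by (auto simp: e ring_distribs sum.distrib)
  qed
  have sm: "c \<cdot>\<^sub>m X \<in> PP n bk S" if X: "X \<in> PP n bk S" for X c
  proof -
    have cX: "X \<in> carrier_mat n n"
      using X by (auto simp: PP_def gs_def)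
    have e: "(S * (c \<cdot>\<^sub>m X)) $$ (i, j) = c * (S * X) $$ (i, j)" if "i < n" "j < n" for i j
      using that cX S by (simp add: me sum_distrib_left mult_ac)
    have e2: "(\<Sum>k<n. c * (S * X) $$ (r, k) * v k) = c * (\<Sum>k<n. (S * X) $$ (r, k) * v k)" for r v
      by (simp add: sum_distrib_left mult_ac)
    show ?thesis using X cX unfolding PP_def gs_def cA_def cB_def
      by (auto simp: e e2)
  qed
  show ?thesis unfolding mat_subspace_def using z add sm
    by (auto simp: PP_def gs_def)
qed


lemma add_entry: "X \<in> carrier_mat n n \<Longrightarrow> Y \<in> carrier_mat n n \<Longrightarrow> i < n \<Longrightarrow> j < n \<Longrightarrow>
   (S * (X + Y)) $$ (i, j) = (S * X) $$ (i, j) + (S * Y) $$ (i, j)"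
  using S by (simp add: me ring_distribs sum.distrib)

lemma minus_entry: "X \<in> carrier_mat n n \<Longrightarrow> Y \<in> carrier_mat n n \<Longrightarrow> i < n \<Longrightarrow> j < n \<Longrightarrow>
   (S * (X - Y)) $$ (i, j) = (S * X) $$ (i, j) - (S * Y) $$ (i, j)"
  using S by (simp add: me ring_distribs sum_subtractf minus_carrier_mat)

lemma smult_entry: "X \<in> carrier_mat n n \<Longrightarrow> i < n \<Longrightarrow> j < n \<Longrightarrow>
   (S * (c \<cdot>\<^sub>m X)) $$ (i, j) = c * (S * X) $$ (i, j)"
  using S by (simp add: me sum_distrib_left mult_ac)

lemma lam_add: "X \<in> carrier_mat n n \<Longrightarrow> Y \<in> carrier_mat n n \<Longrightarrow> lam S (X + Y) = lam S X + lam S Y"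
  using S by (simp add: lam_def mtrace_def add_entry sum.distrib)

lemma lam_minus: "X \<in> carrier_mat n n \<Longrightarrow> Y \<in> carrier_mat n n \<Longrightarrow> lam S (X - Y) = lam S X - lam S Y"
  using S by (simp add: lam_def mtrace_def minus_entry sum_subtractf minus_carrier_mat)

lemma lam_smult: "X \<in> carrier_mat n n \<Longrightarrow> lam S (c \<cdot>\<^sub>m X) = c * lam S X"
  using S by (simp add: lam_def mtrace_def smult_entry sum_distrib_left)

lemma lam_prod: assumes "X \<in> carrier_mat n n" "Y \<in> carrier_mat n n"
  shows "lam S (X * Y) = (\<Sum>i<n. \<Sum>k<n. (S * X) $$ (i, k) * Y $$ (k, i))"
proof -
  have "S * (X * Y) = (S * X) * Y" using assms S by simp
  moreover have "S * X \<in> carrier_mat n n" using assms S by simp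
  ultimately have "lam S (X * Y) = (\<Sum>i<n. ((S * X) * Y) $$ (i, i))"
    unfolding lam_def mtrace_def using S by simp
  then show ?thesis using me[OF \<open>S * X \<in> carrier_mat n n\<close> assms(2)] by simp
qed

lemma gs_mult: assumes X: "X \<in> gs n bk" and Y: "Y \<in> gs n bk" shows "X * Y \<in> gs n bk"
proof -
  have cX: "X \<in> carrier_mat n n" and cY: "Y \<in> carrier_mat n n" using X Y gs_carrier by auto
  have "(X * Y) $$ (i, j) = 0" if "i < n" "j < n" "bk j \<le> bk i" for i j
  proof -
    have "(X * Y) $$ (i, j) = (\<Sum>k<n. X $$ (i, k) * Y $$ (k, j))" using me[OF cX cY that(1,2)] .
    also have "\<dots> = 0"
    proof (rule sum.neutral, intro ballI)
      fix k assume k: "k \<in> {..<n}"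
      show "X $$ (i, k) * Y $$ (k, j) = 0"
        using gsD[OF X that(1), of k] gsD[OF Y _ that(2), of k] k that(3) by fastforce
    qed
    finally show ?thesis .
  qed
  then show ?thesis using cX cY unfolding gs_def by auto
qed

lemma PP_mult: assumes X: "X \<in> PP n bk S" and Y: "Y \<in> PP n bk S" shows "X * Y \<in> PP n bk S"
proof -
  have gX: "X \<in> gs n bk" and gY: "Y \<in> gs n bk" and aX: "cA n bk S X" and aY: "cA n bk S Y"
    and bX: "cB n bk S X" using X Y by (auto simp: PP_def)
  have cX: "X \<in> carrier_mat n n" and cY: "Y \<in> carrier_mat n n" using gX gY gs_carrier by auto
  have SXY: "S * (X * Y) = (S * X) * Y" using cX cY S by simp
  have cSX: "S * X \<in> carrier_mat n n" using cX S by simp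
  have A: "cA n bk S (X * Y)" unfolding cA_def
  proof (intro allI impI)
    fix r j assume r: "r < n" and j: "j < n" and r3: "bk r = 3" and j12: "bk j = 1 \<or> bk j = 2"
    have "(S * (X * Y)) $$ (r, j) = (\<Sum>k<n. (S * X) $$ (r, k) * Y $$ (k, j))"
      unfolding SXY using me[OF cSX cY r j] .
    also have "\<dots> = 0"
    proof (rule sum.neutral, intro ballI)
      fix k assume k: "k \<in> {..<n}"
      show "(S * X) $$ (r, k) * Y $$ (k, j) = 0"
      proof (cases "Y $$ (k, j) = 0")
        case False
        then have "bk k < bk j" using gsD[OF gY _ j] k by auto
        then have "bk k = 0 \<or> bk k = 1" using j12 by auto
        then have "(S * X) $$ (r, k) = 0"
          using col0[OF S gX r] aX r r3 k unfolding cA_def by auto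
        then show ?thesis by simp
      qed simp
    qed
    finally show "(S * (X * Y)) $$ (r, j) = 0" .
  qed
  have B: "cB n bk S (X * Y)" unfolding cB_def
  proof (intro allI impI)
    fix v r assume v: "adm n bk S v" and r: "r < n" and r2: "bk r = 2"
    define w where "w m = (\<Sum>k<n. Y $$ (m, k) * v k)" for m
    have w: "adm n bk S w" unfolding adm_def
    proof (intro conjI allI impI)
      fix j assume j: "j < n" and "2 \<le> bk j"
      show "w j = 0" unfolding w_def
      proof (rule sum.neutral, intro ballI)
        fix k assume k: "k \<in> {..<n}"
        show "Y $$ (j, k) * v k = 0"
          using gsD[OF gY j, of k] k v \<open>2 \<le> bk j\<close> unfolding adm_def by fastforce
      qed
    next
      fix r' assume r': "r' < n" "bk r' = 3"
      have "(\<Sum>m<n. S $$ (r', m) * w m) = (\<Sum>m<n. \<Sum>k<n. S $$ (r', m) * (Y $$ (m, k) * v k))"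
        unfolding w_def by (simp add: sum_distrib_left)
      also have "\<dots> = (\<Sum>k<n. \<Sum>m<n. S $$ (r', m) * (Y $$ (m, k) * v k))"
        by (rule sum.swap)
      also have "\<dots> = (\<Sum>k<n. (S * Y) $$ (r', k) * v k)"
        using me[OF S cY] r' by (simp add: sum_distrib_left mult_ac)
      also have "\<dots> = 0"
      proof (rule sum.neutral, intro ballI)
        fix k assume k: "k \<in> {..<n}"
        show "(S * Y) $$ (r', k) * v k = 0"
        proof (cases "v k = 0")
          case False
          then have "bk k < 2" using v k unfolding adm_def by (meson lessThan_iff not_le)
          then have "bk k = 0 \<or> bk k = 1" by auto
          then have "(S * Y) $$ (r', k) = 0"
            using col0[OF S gY r'(1)] aY r' k unfolding cA_def by auto
          then show ?thesis by simp
        qed simp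
      qed
      finally show "(\<Sum>m<n. S $$ (r', m) * w m) = 0" .
    qed
    have "(\<Sum>k<n. (S * (X * Y)) $$ (r, k) * v k) = (\<Sum>k<n. \<Sum>m<n. (S * X) $$ (r, m) * Y $$ (m, k) * v k)"
      unfolding SXY using me[OF cSX cY r] by (simp add: sum_distrib_right)
    also have "\<dots> = (\<Sum>m<n. \<Sum>k<n. (S * X) $$ (r, m) * Y $$ (m, k) * v k)"
      by (rule sum.swap)
    also have "\<dots> = (\<Sum>m<n. (S * X) $$ (r, m) * w m)"
      unfolding w_def by (simp add: sum_distrib_left mult_ac)
    also have "\<dots> = 0" using bX w r r2 unfolding cB_def by blast
    finally show "(\<Sum>k<n. (S * (X * Y)) $$ (r, k) * v k) = 0" .
  qed
  show ?thesis using A B gs_mult[OF gX gY] by (simp add: PP_def)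
qed

lemma PP_lam: assumes X: "X \<in> PP n bk S" and Y: "Y \<in> PP n bk S" shows "lam S (X * Y) = 0"
proof -
  have gX: "X \<in> gs n bk" and gY: "Y \<in> gs n bk" and aX: "cA n bk S X" and aY: "cA n bk S Y"
    and bX: "cB n bk S X" using X Y by (auto simp: PP_def)
  have cX: "X \<in> carrier_mat n n" and cY: "Y \<in> carrier_mat n n" using gX gY gs_carrier by auto
  have "(\<Sum>k<n. (S * X) $$ (i, k) * Y $$ (k, i)) = 0" if i: "i < n" for i
  proof (cases "bk i = 2")
    case True
    have "adm n bk S (\<lambda>k. Y $$ (k, i))" unfolding adm_def
    proof (intro conjI allI impI)
      fix j assume "j < n" "2 \<le> bk j"
      then show "Y $$ (j, i) = 0" using gsD[OF gY _ i, of j] True by fastforce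
    next
      fix r assume r: "r < n" "bk r = 3"
      have "(\<Sum>k<n. S $$ (r, k) * Y $$ (k, i)) = (S * Y) $$ (r, i)" using me[OF S cY r(1) i] by simp
      also have "\<dots> = 0" using aY r i True unfolding cA_def by auto
      finally show "(\<Sum>k<n. S $$ (r, k) * Y $$ (k, i)) = 0" .
    qed
    then show ?thesis using bX i True unfolding cB_def by blast
  next
    case False
    show ?thesis
    proof (rule sum.neutral, intro ballI)
      fix k assume k: "k \<in> {..<n}"
      show "(S * X) $$ (i, k) * Y $$ (k, i) = 0"
      proof (cases "Y $$ (k, i) = 0")
        case nz: False
        then have lt: "bk k < bk i" using gsD[OF gY _ i] k by auto
        show ?thesis
        proof (cases "bk k = 0")
          case True then show ?thesis using col0[OF S gX i] k by auto
        next
          case False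
          then have "bk i = 3" "bk k = 1 \<or> bk k = 2" using lt bk3[of i] \<open>bk i \<noteq> 2\<close> by auto
          then show ?thesis using aX i k unfolding cA_def by auto
        qed
      qed simp
    qed
  qed
  then show ?thesis using lam_prod[OF cX cY] by simp
qed


lemma perp_cA: assumes gX: "X \<in> gs n bk" and orth: "\<forall>Y\<in>PP n bk S. lam S (X * Y) = lam S (Y * X)"
  shows "cA n bk S X"
  unfolding cA_def
proof (intro allI impI)
  fix r j assume r: "r < n" and j: "j < n" and r3: "bk r = 3" and j12: "bk j = 1 \<or> bk j = 2"
  have cX: "X \<in> carrier_mat n n" using gX gs_carrier by auto
  define E :: "'a mat" where "E = mat n n (\<lambda>(a, b). if a = j \<and> b = r then 1 else 0)"
  have cE: "E \<in> carrier_mat n n" unfolding E_def by simp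
  have Ee: "E $$ (a, b) = (if a = j \<and> b = r then 1 else 0)" if "a < n" "b < n" for a b
    using that unfolding E_def by simp
  have jr: "j \<noteq> r" using j12 r3 by auto
  have SE: "(S * E) $$ (i, k) = (if k = r then S $$ (i, j) else 0)" if "i < n" "k < n" for i k
  proof (cases "k = r")
    case True
    have "(S * E) $$ (i, k) = (\<Sum>m<n. if m = j then S $$ (i, m) else 0)"
      using me[OF S cE that] proof (rule trans)
      show "(\<Sum>m<n. S $$ (i, m) * E $$ (m, k)) = (\<Sum>m<n. if m = j then S $$ (i, m) else 0)"
        by (rule sum.cong[OF refl]) (use that True in \<open>simp add: Ee\<close>)
    qed
    also have "\<dots> = S $$ (i, j)" using j by simp
    finally show ?thesis using True by simp
  next
    case False
    then show ?thesis using me[OF S cE that] that by (simp add: Ee)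
  qed
  have gE: "E \<in> gs n bk" unfolding gs_def using cE Ee jr r3 j12 by auto
  have aE: "cA n bk S E" unfolding cA_def using SE r3 by auto
  have bE: "cB n bk S E" unfolding cB_def
  proof (intro allI impI)
    fix v r' assume v: "adm n bk S v" and r': "r' < n" "bk r' = 2"
    show "(\<Sum>k<n. (S * E) $$ (r', k) * v k) = 0"
    proof (rule sum.neutral, intro ballI)
      fix k assume k: "k \<in> {..<n}"
      show "(S * E) $$ (r', k) * v k = 0"
        using SE[OF r'(1)] k v r r3 unfolding adm_def by auto
    qed
  qed
  have EP: "E \<in> PP n bk S" using gE aE bE by (simp add: PP_def)
  have "lam S (X * E) = (\<Sum>i<n. \<Sum>k<n. (S * X) $$ (i, k) * E $$ (k, i))" by (rule lam_prod[OF cX cE])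
  also have "\<dots> = (\<Sum>i<n. if i = r then (S * X) $$ (i, j) else 0)"
  proof (rule sum.cong[OF refl])
    fix i assume i: "i \<in> {..<n}"
    have "(\<Sum>k<n. (S * X) $$ (i, k) * E $$ (k, i)) = (\<Sum>k<n. if k = j then (if i = r then (S * X) $$ (i, k) else 0) else 0)"
      using i by (intro sum.cong) (auto simp: Ee)
    also have "\<dots> = (if i = r then (S * X) $$ (i, j) else 0)" using j by simp
    finally show "(\<Sum>k<n. (S * X) $$ (i, k) * E $$ (k, i)) = (if i = r then (S * X) $$ (i, j) else 0)" .
  qed
  also have "\<dots> = (S * X) $$ (r, j)" using r by simp
  finally have l1: "lam S (X * E) = (S * X) $$ (r, j)" .
  have "lam S (E * X) = (\<Sum>i<n. \<Sum>k<n. (S * E) $$ (i, k) * X $$ (k, i))" by (rule lam_prod[OF cE cX])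
  also have "\<dots> = 0"
  proof (intro sum.neutral ballI)
    fix i k assume i: "i \<in> {..<n}" and k: "k \<in> {..<n}"
    show "(S * E) $$ (i, k) * X $$ (k, i) = 0"
    proof (cases "k = r")
      case True
      then have "X $$ (k, i) = 0" using gsD[OF gX, of k i] i k r3 bk3[of i] by fastforce
      then show ?thesis by simp
    qed (use SE i k in auto)
  qed
  finally show "(S * X) $$ (r, j) = 0" using l1 orth EP by auto
qed

lemma perp_cB: assumes gX: "X \<in> gs n bk" and orth: "\<forall>Y\<in>PP n bk S. lam S (X * Y) = lam S (Y * X)"
  shows "cB n bk S X"
  unfolding cB_def
proof (intro allI impI)
  fix v r assume v: "adm n bk S v" and r: "r < n" and r2: "bk r = 2"
  have cX: "X \<in> carrier_mat n n" using gX gs_carrier by auto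
  have v0: "v j = 0" if "j < n" "2 \<le> bk j" for j using v that unfolding adm_def by auto
  have vS: "(\<Sum>k<n. S $$ (i, k) * v k) = 0" if "i < n" "bk i = 3" for i using v that unfolding adm_def by auto
  define E :: "'a mat" where "E = mat n n (\<lambda>(a, b). if b = r then v a else 0)"
  have cE: "E \<in> carrier_mat n n" unfolding E_def by simp
  have Ee: "E $$ (a, b) = (if b = r then v a else 0)" if "a < n" "b < n" for a b
    using that unfolding E_def by simp
  have SE: "(S * E) $$ (i, k) = (if k = r then (\<Sum>m<n. S $$ (i, m) * v m) else 0)" if "i < n" "k < n" for i k
    using me[OF S cE that] that by (simp add: Ee)
  have gE: "E \<in> gs n bk" unfolding gs_def using cE Ee r2 v0 by auto
  have aE: "cA n bk S E" unfolding cA_def using SE vS by auto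
  have bE: "cB n bk S E" unfolding cB_def
  proof (intro allI impI)
    fix w r' assume w: "adm n bk S w" and r': "r' < n" "bk r' = 2"
    show "(\<Sum>k<n. (S * E) $$ (r', k) * w k) = 0"
    proof (rule sum.neutral, intro ballI)
      fix k assume k: "k \<in> {..<n}"
      show "(S * E) $$ (r', k) * w k = 0"
        using SE[OF r'(1)] k w r r2 unfolding adm_def by auto
    qed
  qed
  have EP: "E \<in> PP n bk S" using gE aE bE by (simp add: PP_def)
  have "lam S (X * E) = (\<Sum>i<n. \<Sum>k<n. (S * X) $$ (i, k) * E $$ (k, i))" by (rule lam_prod[OF cX cE])
  also have "\<dots> = (\<Sum>i<n. if i = r then (\<Sum>k<n. (S * X) $$ (r, k) * v k) else 0)"
    by (intro sum.cong refl) (auto simp: Ee)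
  also have "\<dots> = (\<Sum>k<n. (S * X) $$ (r, k) * v k)" using r by simp
  finally have l1: "lam S (X * E) = (\<Sum>k<n. (S * X) $$ (r, k) * v k)" .
  have "lam S (E * X) = (\<Sum>i<n. \<Sum>k<n. (S * E) $$ (i, k) * X $$ (k, i))" by (rule lam_prod[OF cE cX])
  also have "\<dots> = 0"
  proof (intro sum.neutral ballI)
    fix i k assume i: "i \<in> {..<n}" and k: "k \<in> {..<n}"
    show "(S * E) $$ (i, k) * X $$ (k, i) = 0"
    proof (cases "k = r \<and> X $$ (k, i) \<noteq> 0")
      case True
      then have "bk i = 3" using gsD[OF gX, of k i] i k r2 bk3[of i] by fastforce
      then show ?thesis using SE vS i k by auto
    qed (use SE i k in auto)
  qed
  finally show "(\<Sum>k<n. (S * X) $$ (r, k) * v k) = 0" using l1 orth EP by auto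
qed

lemma main_gs: "assoc_polarization n (gs n bk) (lam S) (PP n bk S)"
proof -
  have PPc: "X \<in> carrier_mat n n" if "X \<in> PP n bk S" for X
    using that gs_carrier by (auto simp: PP_def)
  have iso: "isotropic (lam S) (PP n bk S)"
    unfolding isotropic_def Bform_def
  proof (intro ballI)
    fix x y assume x: "x \<in> PP n bk S" and y: "y \<in> PP n bk S"
    have "x * y \<in> carrier_mat n n" "y * x \<in> carrier_mat n n" using PPc[OF x] PPc[OF y] by auto
    then show "lam S (x * y - y * x) = 0" using lam_minus PP_lam[OF x y] PP_lam[OF y x] by simp
  qed
  have max: "Q = PP n bk S" if Q: "mat_subspace n Q" "Q \<subseteq> gs n bk" "isotropic (lam S) Q" "PP n bk S \<subseteq> Q" for Q
  proof
    show "Q \<subseteq> PP n bk S"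
    proof
      fix X assume X: "X \<in> Q"
      have gX: "X \<in> gs n bk" using X Q by auto
      have orth: "\<forall>Y\<in>PP n bk S. lam S (X * Y) = lam S (Y * X)"
      proof
        fix Y assume Y: "Y \<in> PP n bk S"
        then have "Bform (lam S) X Y = 0" using Q X unfolding isotropic_def by auto
        then show "lam S (X * Y) = lam S (Y * X)"
          unfolding Bform_def using lam_minus gs_carrier[OF gX] PPc[OF Y] by simp
      qed
      show "X \<in> PP n bk S" using perp_cA[OF gX orth] perp_cB[OF gX orth] gX by (simp add: PP_def)
    qed
  qed (use that in auto)
  have K: "mat_subspace n {z \<in> carrier_mat n n. lam S z = 0}"
  proof -
    have "lam S (0\<^sub>m n n) = 0" using S by (simp add: lam_def mtrace_def me)
    then show ?thesis unfolding mat_subspace_def using lam_add lam_smult by auto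
  qed
  have ps: "lam S z = 0" if "z \<in> prod_span n (PP n bk S)" for z
  proof -
    have "{x * y |x y. x \<in> PP n bk S \<and> y \<in> PP n bk S} \<subseteq> {z \<in> carrier_mat n n. lam S z = 0}"
      using PP_lam PPc by fastforce
    then show ?thesis using that K unfolding prod_span_def by blast
  qed
  show ?thesis unfolding assoc_polarization_def polarization_def
    using PP_sub iso max PP_mult ps by (auto simp: PP_def)
qed

end

theorem theorem3p2:
  fixes n1 n2 n3 n4 :: nat
    and S :: "'a::{finite,field} mat"
  assumes "0 < n1" "0 < n2" "0 < n3" "0 < n4"
    and "S \<in> transpose_mat ` (pattern_alg n1 n2 n3 n4 :: 'a mat set)"
  shows "\<exists>P. assoc_polarization (n1+n2+n3+n4) (pattern_alg n1 n2 n3 n4) (lam S) P"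
proof -
  have eq: "pattern_alg n1 n2 n3 n4 = (gs (n1+n2+n3+n4) (blk n1 n2 n3) :: 'a mat set)"
    unfolding pattern_alg_def gs_def by auto
  have S: "S \<in> carrier_mat (n1+n2+n3+n4) (n1+n2+n3+n4)"
    using assms(5) unfolding pattern_alg_def by auto
  have b3: "blk n1 n2 n3 i \<le> 3" for i unfolding blk_def by auto
  show ?thesis unfolding eq using main_gs[where bk="blk n1 n2 n3", OF S b3] by blast
qed

end
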